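(* Let $I$ be a nonempty finite set, $A$ a nonempty set, $\rho_i:A\to A$ maps ($i\in I$) with $\rho_i^2=\mathrm{id}$ for all $i$, and $C^a=(c^a_{ij})_{i,j\in I}\in\mathbb Z^{I\times I}$ ($a\in A$) with $c^a_{ii}=2$ for all $i\in I$, $a\in A$. For $a\in A$ let $R^a\subset\mathbb Z^I$ be subsets satisfying (R1)–(R4) below. Then $\mathcal C=(I,A,(\rho_i)_{i\in I},(C^a)_{a\in A})$ is a Cartan scheme and $(R^a)_{a\in A}$ is a root system of type $\mathcal C$. Here, with $\sigma_i^a\in\mathrm{End}(\mathbb Z^I)$ given by $\sigma_i^a(\alpha_j)=\alpha_j-c^a_{ij}\alpha_i$, $R^a_+=R^a\cap\mathbb N_0^I$ and $m^a_{i,j}=|R^a\cap(\mathbb N_0\alpha_i+\mathbb N_0\alpha_j)|$, the conditions are, for all $a\in A$, $i,j\in I$: (R1) $R^a=R^a_+\cup(-R^a_+)$; (R2) $R^a\cap\mathbb Z\alpha_i=\{\alpha_i,-\alpha_i\}$; (R3) $\sigma_i^a(R^a)=R^{\rho_i(a)}$; (R4) if $i\neq j$ and $m^a_{i,j}$ is finite then $(\rho_i\rho_j)^{m^a_{i,j}}(a)=a$.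
   Context: $\{\alpha_i\mid i\in I\}$ is the standard basis of $\mathbb Z^I$; $\mathbb N_0=\{0,1,2,\dots\}$. A generalized Cartan matrix is $C=(c_{ij})_{i,j\in I}\in\mathbb Z^{I\times I}$ with $c_{ii}=2$, $c_{jk}\le0$ for $j\ne k$, and $c_{ij}=0\Rightarrow c_{ji}=0$. A Cartan scheme $\mathcal C=\mathcal C(I,A,(\rho_i)_{i\in I},(C^a)_{a\in A})$ consists of a nonempty set $A$, maps $\rho_i:A\to A$ and generalized Cartan matrices $C^a$ such that (C1) $\rho_i^2=\mathrm{id}$ and (C2) $c^a_{ij}=c^{\rho_i(a)}_{ij}$ for all $a\in A$, $i,j\in I$. A root system of type $\mathcal C$ is a family $(R^a)_{a\in A}$ of subsets of $\mathbb Z^I$ satisfying (R1)–(R4) as in the claim. *)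

theory Defs
  imports Main
begin

text \<open>Conventions: the index set I is a finite type 'i (nonempty automatically),
  the set A is a type 'a (nonempty automatically). Elements of Z^I are
  functions 'i \<Rightarrow> int. rho i is the map rho_i, C a i j is c^a_{ij},
  R a is R^a.\<close>

definition alpha :: "'i \<Rightarrow> ('i \<Rightarrow> int)" where
  "alpha i = (\<lambda>k. if k = i then 1 else 0)"

text \<open>sigma_i^a: the linear endomorphism of Z^I with
  sigma(alpha_j) = alpha_j - c^a_{ij} alpha_i.\<close>
definition sigma :: "('a \<Rightarrow> 'i \<Rightarrow> 'i \<Rightarrow> int) \<Rightarrow> 'a \<Rightarrow> 'i \<Rightarrow> ('i::finite \<Rightarrow> int) \<Rightarrow> ('i \<Rightarrow> int)" where
  "sigma C a i v = (\<lambda>k. v k - (if k = i then (\<Sum>j\<in>UNIV. C a i j * v j) else 0))"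

definition pos_roots :: "('a \<Rightarrow> ('i \<Rightarrow> int) set) \<Rightarrow> 'a \<Rightarrow> ('i \<Rightarrow> int) set" where
  "pos_roots R a = R a \<inter> {v. \<forall>k. 0 \<le> v k}"

definition rank2_roots :: "('a \<Rightarrow> ('i \<Rightarrow> int) set) \<Rightarrow> 'a \<Rightarrow> 'i \<Rightarrow> 'i \<Rightarrow> ('i \<Rightarrow> int) set" where
  "rank2_roots R a i j =
     R a \<inter> {v. \<exists>m n :: nat. v = (\<lambda>k. int m * alpha i k + int n * alpha j k)}"

definition gen_cartan_matrix :: "('i \<Rightarrow> 'i \<Rightarrow> int) \<Rightarrow> bool" where
  "gen_cartan_matrix c \<longleftrightarrow>
     (\<forall>i. c i i = 2) \<and> (\<forall>j k. j \<noteq> k \<longrightarrow> c j k \<le> 0) \<and> (\<forall>i j. c i j = 0 \<longrightarrow> c j i = 0)"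

definition cartan_scheme :: "('i \<Rightarrow> 'a \<Rightarrow> 'a) \<Rightarrow> ('a \<Rightarrow> 'i \<Rightarrow> 'i \<Rightarrow> int) \<Rightarrow> bool" where
  "cartan_scheme rho C \<longleftrightarrow>
     (\<forall>a. gen_cartan_matrix (C a)) \<and>
     (\<forall>i a. rho i (rho i a) = a) \<and>
     (\<forall>a i j. C a i j = C (rho i a) i j)"

definition root_system_axioms ::
  "('i::finite \<Rightarrow> 'a \<Rightarrow> 'a) \<Rightarrow> ('a \<Rightarrow> 'i \<Rightarrow> 'i \<Rightarrow> int) \<Rightarrow> ('a \<Rightarrow> ('i \<Rightarrow> int) set) \<Rightarrow> bool" where
  "root_system_axioms rho C R \<longleftrightarrow>
     (\<forall>a. R a = pos_roots R a \<union> uminus ` pos_roots R a) \<and>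
     (\<forall>a i. R a \<inter> {v. \<exists>k::int. v = (\<lambda>l. k * alpha i l)} = {alpha i, - alpha i}) \<and>
     (\<forall>a i. sigma C a i ` R a = R (rho i a)) \<and>
     (\<forall>a i j. i \<noteq> j \<and> finite (rank2_roots R a i j) \<longrightarrow>
        ((rho i \<circ> rho j) ^^ card (rank2_roots R a i j)) a = a)"

definition root_system ::
  "('i::finite \<Rightarrow> 'a \<Rightarrow> 'a) \<Rightarrow> ('a \<Rightarrow> 'i \<Rightarrow> 'i \<Rightarrow> int) \<Rightarrow> ('a \<Rightarrow> ('i \<Rightarrow> int) set) \<Rightarrow> bool" where
  "root_system rho C R \<longleftrightarrow> cartan_scheme rho C \<and> root_system_axioms rho C R"

end

theory Submission
  imports Defs
begin

lemma sum_two: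
  fixes c :: "'i::finite \<Rightarrow> int"
  assumes "i \<noteq> j"
  shows "(\<Sum>l\<in>UNIV. c l * (p * alpha i l + q * alpha j l)) = c i * p + c j * q"
proof -
  have "(\<Sum>l\<in>UNIV. c l * (p * alpha i l + q * alpha j l))
      = (\<Sum>l\<in>UNIV. (if l = i then c l * p else 0)) + (\<Sum>l\<in>UNIV. (if l = j then c l * q else 0))"
    unfolding sum.distrib[symmetric]
    by (rule sum.cong) (auto simp: alpha_def assms)
  also have "\<dots> = c i * p + c j * q" by simp
  finally show ?thesis .
qed

lemma sigma_two:
  fixes C :: "'a \<Rightarrow> 'i::finite \<Rightarrow> 'i \<Rightarrow> int"
  assumes "i \<noteq> j"
  shows "sigma C x k (\<lambda>l. p * alpha i l + q * alpha j l) k' =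
     p * alpha i k' + q * alpha j k' - (if k' = k then C x k i * p + C x k j * q else 0)"
  using sum_two[OF assms, of "C x k" p q] by (simp add: sigma_def)

lemma alpha_eq: "alpha j = (\<lambda>l. 0 * alpha i l + 1 * alpha j l)" by simp

theorem lemma2p5:
  fixes rho :: "'i::finite \<Rightarrow> 'a \<Rightarrow> 'a"
    and C :: "'a \<Rightarrow> 'i \<Rightarrow> 'i \<Rightarrow> int"
    and R :: "'a \<Rightarrow> ('i \<Rightarrow> int) set"
  assumes rho_inv: "\<And>i a. rho i (rho i a) = a"
    and diag: "\<And>a i. C a i i = 2"
    and roots: "root_system_axioms rho C R"
  shows "cartan_scheme rho C \<and> root_system rho C R"
proof -
  note rs = roots[unfolded root_system_axioms_def]
  have R1: "\<And>x. R x = pos_roots R x \<union> uminus ` pos_roots R x"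
    by (rule spec[OF conjunct1[OF rs]])
  have R2: "\<And>x i. R x \<inter> {v. \<exists>k::int. v = (\<lambda>l. k * alpha i l)} = {alpha i, - alpha i}"
    by (rule spec[OF spec[OF conjunct1[OF conjunct2[OF rs]]]])
  have R3: "\<And>x i. sigma C x i ` R x = R (rho i x)"
    by (rule spec[OF spec[OF conjunct1[OF conjunct2[OF conjunct2[OF rs]]]]])
  have al: "\<And>x i. alpha i \<in> R x"
  proof -
    fix x :: 'a and i :: 'i
    have "alpha i \<in> {alpha i, - alpha i}" by simp
    then show "alpha i \<in> R x" unfolding R2[of x i, symmetric] by (rule IntD1)
  qed
  have sgn: "\<And>x v k l. v \<in> R x \<Longrightarrow> 0 < v k \<Longrightarrow> 0 \<le> v l"
  proof -
    fix x v k l assume v: "v \<in> R x" and "0 < v k"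
    from v R1[of x] have "v \<in> pos_roots R x \<or> v \<in> uminus ` pos_roots R x" by blast
    then show "0 \<le> v l"
    proof
      assume "v \<in> uminus ` pos_roots R x"
      then obtain w where "v = - w" "\<forall>k. 0 \<le> w k" unfolding pos_roots_def by auto
      with \<open>0 < v k\<close> show ?thesis by (metis add.inverse_inverse neg_0_less_iff_less not_le uminus_apply)
    qed (auto simp: pos_roots_def)
  qed
  have sgn2: "\<And>x v k l. v \<in> R x \<Longrightarrow> v k < 0 \<Longrightarrow> v l \<le> 0"
    using sgn by (meson not_le)
  have img: "\<And>x i v. v \<in> R x \<Longrightarrow> sigma C x i v \<in> R (rho i x)"
    using R3 by blast
  have P1: "\<And>a i j. i \<noteq> j \<Longrightarrow> C a i j \<le> 0"
  proof -
    fix a :: 'a and i j :: 'i assume ij: "i \<noteq> j"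
    have w: "sigma C a i (\<lambda>l. 0 * alpha i l + 1 * alpha j l) \<in> R (rho i a)"
      using img[OF al[of j a], of i] by simp
    have "0 \<le> sigma C a i (\<lambda>l. 0 * alpha i l + 1 * alpha j l) i"
      apply (rule sgn[OF w, of j])
      using ij by (simp only: sigma_two[OF ij]) (simp add: alpha_def)
    then show "C a i j \<le> 0" using ij by (simp only: sigma_two[OF ij]) (simp add: alpha_def)
  qed
  have P2: "\<And>a i j. i \<noteq> j \<Longrightarrow> C a i j \<le> C (rho i a) i j"
  proof -
    fix a :: 'a and i j :: 'i assume ij: "i \<noteq> j"
    define b where "b = rho i a"
    have "sigma C b i (\<lambda>l. 0 * alpha i l + 1 * alpha j l) \<in> R a"
      using img[OF al[of j b], of i] by (simp add: b_def rho_inv)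
    moreover have "sigma C b i (\<lambda>l. 0 * alpha i l + 1 * alpha j l) = (\<lambda>l. (- C b i j) * alpha i l + 1 * alpha j l)"
      using ij by (intro ext, simp only: sigma_two[OF ij]) (auto simp: alpha_def)
    ultimately have u: "(\<lambda>l. (- C b i j) * alpha i l + 1 * alpha j l) \<in> R a" by simp
    have w: "sigma C a i (\<lambda>l. (- C b i j) * alpha i l + 1 * alpha j l) \<in> R b"
      using img[OF u, of i] by (simp add: b_def)
    have "0 \<le> sigma C a i (\<lambda>l. (- C b i j) * alpha i l + 1 * alpha j l) i"
      apply (rule sgn[OF w, of j])
      using ij by (simp only: sigma_two[OF ij]) (simp add: alpha_def)
    then show "C a i j \<le> C (rho i a) i j" using ij by (simp only: sigma_two[OF ij]) (simp add: alpha_def diag b_def)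
  qed
  have C2: "\<And>a i j. C a i j = C (rho i a) i j"
  proof -
    fix a i j
    show "C a i j = C (rho i a) i j"
    proof (cases "i = j")
      case True then show ?thesis by (simp add: diag)
    next
      case False
      from P2[OF False, of a] P2[OF False, of "rho i a"] show ?thesis by (simp add: rho_inv)
    qed
  qed
  have P3: "\<And>a i j. i \<noteq> j \<Longrightarrow> C a i j = 0 \<Longrightarrow> C a j i = 0"
  proof -
    fix a :: 'a and i j :: 'i assume ij: "i \<noteq> j" and z: "C a i j = 0"
    define d where "d = rho j a"
    have "sigma C d j (\<lambda>l. 1 * alpha i l + 0 * alpha j l) \<in> R a"
      using img[OF al[of i d], of j] by (simp add: d_def rho_inv)
    moreover have "sigma C d j (\<lambda>l. 1 * alpha i l + 0 * alpha j l) = (\<lambda>l. 1 * alpha i l + (- C a j i) * alpha j l)"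
      using ij C2[of a j i] by (intro ext, simp only: sigma_two[OF ij]) (auto simp: alpha_def d_def)
    ultimately have u: "(\<lambda>l. 1 * alpha i l + (- C a j i) * alpha j l) \<in> R a" by simp
    have w: "sigma C a i (\<lambda>l. 1 * alpha i l + (- C a j i) * alpha j l) \<in> R (rho i a)"
      using img[OF u, of i] by simp
    have "sigma C a i (\<lambda>l. 1 * alpha i l + (- C a j i) * alpha j l) j \<le> 0"
      apply (rule sgn2[OF w, of i])
      using ij z by (simp only: sigma_two[OF ij]) (simp add: alpha_def diag)
    then have "- C a j i \<le> 0" using ij by (simp only: sigma_two[OF ij]) (simp add: alpha_def)
    with P1[of j i a] ij show "C a j i = 0" by simp
  qed
  have cs: "cartan_scheme rho C"
    unfolding cartan_scheme_def gen_cartan_matrix_def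
  proof (intro conjI allI impI)
    fix a i show "C a i i = 2" by (rule diag)
  next
    fix a :: 'a and j k :: 'i assume "j \<noteq> k" then show "C a j k \<le> 0" by (rule P1)
  next
    fix a :: 'a and i j :: 'i assume h: "C a i j = 0"
    show "C a j i = 0"
    proof (cases "i = j")
      case True then show ?thesis using h by simp
    next
      case False then show ?thesis using P3 h by blast
    qed
  next
    fix i a show "rho i (rho i a) = a" by (rule rho_inv)
  next
    fix a i j show "C a i j = C (rho i a) i j" by (rule C2)
  qed
  show ?thesis using cs roots by (simp add: root_system_def)
qed

end
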